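(* Let $B_1,B_2$ be distributions on $\mathbb R$. (i) If $B_1\in\mathcal A^*$, $B_2\in\mathcal T^*$ and $\overline B_2(x)=O[\overline B_1(x)]$, then $\overline{B_1*B_2}(x)\sim\overline B_1(x)+\overline B_2(x)$ and $B_1*B_2\in\mathcal A^*$. (ii) If $B_1\in\mathcal A^*$ and $\overline B_2(x)=o[\overline B_1(x)]$, then $\overline{B_1*B_2}(x)\sim\overline B_1(x)$ and $B_1*B_2\in\mathcal A^*$.
   Context: All one-dimensional distributions have infinite right endpoint; $\overline B=1-B$; asymptotics as $x\to\infty$. $\mathcal L$: $\overline B(x-y)/\overline B(x)\to1$ for all $y>0$. $\mathcal S$: $B\in\mathcal L$ and $\overline{B^{2*}}(x)\sim2\overline B(x)$. $\overline{B^*}(v)=\limsup_x\overline B(vx)/\overline B(x)$, $K_B^-=-\lim_{v\downarrow1}\log\overline{B^*}(v)/\log v$. $\mathcal A^*=\{B\in\mathcal S:K_B^->0\}$, $\mathcal T^*=\{B\in\mathcal L:K_B^->0\}$. *)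

theory Defs
  imports "HOL-Probability.Probability" "HOL-Library.Landau_Symbols"
begin

definition real_distr :: "real measure \<Rightarrow> bool" where
  "real_distr B \<longleftrightarrow> prob_space B \<and> sets B = sets borel"

definition tail :: "real measure \<Rightarrow> real \<Rightarrow> real" where
  "tail B x = measure B {x<..}"

definition inf_right_endpoint :: "real measure \<Rightarrow> bool" where
  "inf_right_endpoint B \<longleftrightarrow> (\<forall>x. tail B x > 0)"

definition long_tailed :: "real measure \<Rightarrow> bool" where
  "long_tailed B \<longleftrightarrow> (\<forall>y>0. ((\<lambda>x. tail B (x - y) / tail B x) \<longlongrightarrow> 1) at_top)"

definition subexponential :: "real measure \<Rightarrow> bool" where
  "subexponential B \<longleftrightarrow> long_tailed B \<and>
     (\<lambda>x. tail (B \<star> B) x) \<sim>[at_top] (\<lambda>x. 2 * tail B x)"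

definition Bstar :: "real measure \<Rightarrow> real \<Rightarrow> ereal" where
  "Bstar B v = Limsup at_top (\<lambda>x. ereal (tail B (v * x) / tail B x))"

definition eln :: "ereal \<Rightarrow> ereal" where
  "eln z = (if z = \<infinity> then \<infinity> else if z \<le> 0 then - \<infinity> else ereal (ln (real_of_ereal z)))"

definition K_minus :: "real measure \<Rightarrow> ereal" where
  "K_minus B = - Lim (at_right (1::real)) (\<lambda>v. eln (Bstar B v) / ereal (ln v))"

definition A_star :: "real measure \<Rightarrow> bool" where
  "A_star B \<longleftrightarrow> subexponential B \<and> K_minus B > 0"

definition T_star :: "real measure \<Rightarrow> bool" where
  "T_star B \<longleftrightarrow> long_tailed B \<and> K_minus B > 0"

end

theory Submission
  imports Defs
begin

lemma rd_prob: "real_distr P \<Longrightarrow> prob_space P"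
  by (simp add: real_distr_def)
lemma rd_sets: "real_distr P \<Longrightarrow> sets P = sets borel"
  by (simp add: real_distr_def)
lemma rd_space: "real_distr P \<Longrightarrow> space P = UNIV"
  using rd_sets[of P] sets_eq_imp_space_eq[of P borel] by simp

lemma rd_pair_sets:
  assumes "real_distr P" "real_distr Q"
  shows "sets (P \<Otimes>\<^sub>M Q) = sets (borel :: (real \<times> real) measure)"
proof -
  have "sets (P \<Otimes>\<^sub>M Q) = sets (borel \<Otimes>\<^sub>M borel :: (real \<times> real) measure)"
    by (rule sets_pair_measure_cong) (use assms rd_sets in auto)
  then show ?thesis by (metis borel_prod)
qed

lemma rd_pair_space:
  assumes "real_distr P" "real_distr Q"
  shows "space (P \<Otimes>\<^sub>M Q) = UNIV"
  using assms by (simp add: space_pair_measure rd_space)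

lemma add_meas: "(\<lambda>(a, b). a + b) \<in> borel_measurable (borel :: (real\<times>real) measure)"
  using borel_measurable_continuous_onI[of "\<lambda>p::real\<times>real. fst p + snd p"]
  by (simp add: case_prod_beta' continuous_intros)

lemma tail_conv:
  assumes "real_distr P" "real_distr Q"
  shows "tail (P \<star> Q) x = measure (P \<Otimes>\<^sub>M Q) {p. x < fst p + snd p}"
proof -
  have m: "(\<lambda>(a, b). a + b) \<in> measurable (P \<Otimes>\<^sub>M Q) (borel :: real measure)"
    using add_meas by (simp add: measurable_cong_sets[OF rd_pair_sets[OF assms] refl])
  have "tail (P \<star> Q) x = measure (P \<Otimes>\<^sub>M Q) ((\<lambda>(a, b). a + b) -` {x<..} \<inter> space (P \<Otimes>\<^sub>M Q))"
    unfolding tail_def convolution_def by (rule measure_distr[OF m]) auto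
  also have "\<dots> = measure (P \<Otimes>\<^sub>M Q) {p. x < fst p + snd p}"
    using rd_pair_space[OF assms] by (auto intro!: arg_cong[where f="measure _"] simp: case_prod_beta)
  finally show ?thesis .
qed

lemma real_distr_conv:
  assumes "real_distr P" "real_distr Q"
  shows "real_distr (P \<star> Q)"
proof -
  interpret P: prob_space P using assms rd_prob by auto
  interpret Q: prob_space Q using assms rd_prob by auto
  have ps: "prob_space (P \<Otimes>\<^sub>M Q)" by (rule prob_space_pair) unfold_locales
  have m: "(\<lambda>(a, b). a + b) \<in> measurable (P \<Otimes>\<^sub>M Q) (borel :: real measure)"
    using add_meas by (simp add: measurable_cong_sets[OF rd_pair_sets[OF assms] refl])
  show ?thesis unfolding real_distr_def convolution_def
    using prob_space.prob_space_distr[OF ps m] by simp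
qed

lemma pair_sets_borel:
  assumes "real_distr P" "real_distr Q" "S \<in> sets borel"
  shows "S \<in> sets (P \<Otimes>\<^sub>M Q)"
  using assms rd_pair_sets by auto

lemma rect_meas:
  assumes "real_distr P" "real_distr Q" "X \<in> sets borel" "Y \<in> sets borel"
  shows "measure (P \<Otimes>\<^sub>M Q) (X \<times> Y) = measure P X * measure Q Y"
proof -
  interpret Q: prob_space Q using assms rd_prob by auto
  interpret P: prob_space P using assms rd_prob by auto
  have "emeasure (P \<Otimes>\<^sub>M Q) (X \<times> Y) = emeasure P X * emeasure Q Y"
    using assms rd_sets by (intro Q.emeasure_pair_measure_Times) auto
  then show ?thesis
    by (simp add: measure_def enn2real_mult)
qed

definition MM :: "real measure \<Rightarrow> real measure \<Rightarrow> real \<Rightarrow> real \<Rightarrow> real" where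
  "MM P Q A x = measure (P \<Otimes>\<^sub>M Q) {p. A < fst p \<and> A < snd p \<and> x < fst p + snd p}"

lemma S3_borel: "{p::real\<times>real. A < fst p \<and> A < snd p \<and> x < fst p + snd p} \<in> sets borel"
  by (intro borel_open open_Collect_conj open_Collect_less continuous_intros)
lemma S_borel: "{p::real\<times>real. x < fst p + snd p} \<in> sets borel"
  by (intro borel_open open_Collect_conj open_Collect_less continuous_intros)

lemma decomp_upper:
  assumes "real_distr P" "real_distr Q"
  shows "tail (P \<star> Q) x \<le> tail P (x - A) + tail Q (x - A) + MM P Q A x"
proof -
  interpret Q: prob_space Q using assms rd_prob by auto
  interpret P: prob_space P using assms rd_prob by auto
  interpret PQ: prob_space "P \<Otimes>\<^sub>M Q" by (rule prob_space_pair) unfold_locales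
  define T1 where "T1 = {x - A<..} \<times> (UNIV::real set)"
  define T2 where "T2 = (UNIV::real set) \<times> {x - A<..}"
  define S3 where "S3 = {p::real\<times>real. A < fst p \<and> A < snd p \<and> x < fst p + snd p}"
  have T1: "T1 \<in> sets (P \<Otimes>\<^sub>M Q)" unfolding T1_def using assms rd_sets
    by (intro pair_measureI) auto
  have T2: "T2 \<in> sets (P \<Otimes>\<^sub>M Q)" unfolding T2_def using assms rd_sets
    by (intro pair_measureI) auto
  have S3: "S3 \<in> sets (P \<Otimes>\<^sub>M Q)" unfolding S3_def using assms S3_borel
    by (intro pair_sets_borel) auto
  have sub: "{p. x < fst p + snd p} \<subseteq> T1 \<union> T2 \<union> S3"
    unfolding T1_def T2_def S3_def by auto
  have "tail (P \<star> Q) x \<le> measure (P \<Otimes>\<^sub>M Q) (T1 \<union> T2 \<union> S3)"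
    unfolding tail_conv[OF assms] using sub T1 T2 S3 by (intro PQ.finite_measure_mono) auto
  also have "\<dots> \<le> measure (P \<Otimes>\<^sub>M Q) (T1 \<union> T2) + measure (P \<Otimes>\<^sub>M Q) S3"
    using T1 T2 S3 by (intro measure_Un_le) auto
  also have "measure (P \<Otimes>\<^sub>M Q) (T1 \<union> T2) \<le> measure (P \<Otimes>\<^sub>M Q) T1 + measure (P \<Otimes>\<^sub>M Q) T2"
    using T1 T2 by (intro measure_Un_le) auto
  also have "measure (P \<Otimes>\<^sub>M Q) T1 = tail P (x - A)"
    unfolding T1_def using rect_meas[OF assms, of "{x - A<..}" UNIV] Q.prob_space rd_space[OF assms(2)]
    by (simp add: tail_def)
  also have "measure (P \<Otimes>\<^sub>M Q) T2 = tail Q (x - A)"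
    unfolding T2_def using rect_meas[OF assms, of UNIV "{x - A<..}"] P.prob_space rd_space[OF assms(1)]
    by (simp add: tail_def)
  finally show ?thesis unfolding MM_def S3_def by simp
qed

lemma decomp_lower:
  assumes "real_distr P" "real_distr Q" "0 \<le> A" "0 < x"
  shows "tail P (x + A) * measure Q {-A..A} + measure P {-A..A} * tail Q (x + A) + MM P Q A x
         \<le> tail (P \<star> Q) x"
proof -
  interpret Q: prob_space Q using assms rd_prob by auto
  interpret P: prob_space P using assms rd_prob by auto
  interpret PQ: prob_space "P \<Otimes>\<^sub>M Q" by (rule prob_space_pair) unfold_locales
  define R1 where "R1 = {x + A<..} \<times> {-A..A}"
  define R2 where "R2 = {-A..A} \<times> {x + A<..}"
  define S3 where "S3 = {p::real\<times>real. A < fst p \<and> A < snd p \<and> x < fst p + snd p}"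
  have R1: "R1 \<in> sets (P \<Otimes>\<^sub>M Q)" unfolding R1_def using assms rd_sets
    by (intro pair_measureI) auto
  have R2: "R2 \<in> sets (P \<Otimes>\<^sub>M Q)" unfolding R2_def using assms rd_sets
    by (intro pair_measureI) auto
  have S3: "S3 \<in> sets (P \<Otimes>\<^sub>M Q)" unfolding S3_def using assms S3_borel
    by (intro pair_sets_borel) auto
  have S: "{p. x < fst p + snd p} \<in> sets (P \<Otimes>\<^sub>M Q)" using assms S_borel
    by (intro pair_sets_borel) auto
  have sub: "R1 \<union> R2 \<union> S3 \<subseteq> {p. x < fst p + snd p}"
    unfolding R1_def R2_def S3_def by auto
  have d1: "R1 \<inter> R2 = {}" unfolding R1_def R2_def using assms by auto
  have d2: "(R1 \<union> R2) \<inter> S3 = {}" unfolding R1_def R2_def S3_def by auto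
  have "measure (P \<Otimes>\<^sub>M Q) R1 + measure (P \<Otimes>\<^sub>M Q) R2 + measure (P \<Otimes>\<^sub>M Q) S3
      = measure (P \<Otimes>\<^sub>M Q) (R1 \<union> R2 \<union> S3)"
    using R1 R2 S3 d1 d2 by (simp add: PQ.finite_measure_Union)
  also have "\<dots> \<le> tail (P \<star> Q) x"
    unfolding tail_conv[OF assms(1,2)] using sub S R1 R2 S3 by (intro PQ.finite_measure_mono) auto
  finally have "measure (P \<Otimes>\<^sub>M Q) R1 + measure (P \<Otimes>\<^sub>M Q) R2 + measure (P \<Otimes>\<^sub>M Q) S3
      \<le> tail (P \<star> Q) x" .
  moreover have "measure (P \<Otimes>\<^sub>M Q) R1 = tail P (x + A) * measure Q {-A..A}"
    unfolding R1_def using rect_meas[OF assms(1,2), of "{x + A<..}" "{-A..A}"]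
    by (simp add: tail_def)
  moreover have "measure (P \<Otimes>\<^sub>M Q) R2 = measure P {-A..A} * tail Q (x + A)"
    unfolding R2_def using rect_meas[OF assms(1,2), of "{-A..A}" "{x + A<..}"]
    by (simp add: tail_def)
  ultimately show ?thesis unfolding MM_def S3_def by simp
qed

lemma slice_dom:
  assumes "real_distr P" "real_distr F" "0 \<le> c" "\<forall>t\<ge>A. tail P t \<le> c * tail F t"
  shows "emeasure P {t. A < t \<and> A < s \<and> x < t + s} \<le> ennreal c * emeasure F {t. A < t \<and> A < s \<and> x < t + s}"
proof (cases "A < s")
  case False
  then show ?thesis by simp
next
  case True
  interpret P: prob_space P using assms rd_prob by auto
  interpret F: prob_space F using assms rd_prob by auto
  have eq: "{t. A < t \<and> A < s \<and> x < t + s} = {max A (x - s)<..}" using True by auto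
  have "tail P (max A (x - s)) \<le> c * tail F (max A (x - s))" using assms(4) by simp
  then have "ennreal (tail P (max A (x - s))) \<le> ennreal c * ennreal (tail F (max A (x - s)))"
    by (metis assms(3) ennreal_leI ennreal_mult')
  then show ?thesis unfolding eq tail_def by (simp add: P.emeasure_eq_measure F.emeasure_eq_measure)
qed

lemma S3_sets: "real_distr P \<Longrightarrow> real_distr Q \<Longrightarrow>
   {p::real\<times>real. A < fst p \<and> A < snd p \<and> x < fst p + snd p} \<in> sets (P \<Otimes>\<^sub>M Q)"
  using S3_borel pair_sets_borel by blast

lemma MM_dom1:
  assumes "real_distr P" "real_distr Q" "real_distr F" "0 \<le> c" "\<forall>t\<ge>A. tail P t \<le> c * tail F t"
  shows "emeasure (P \<Otimes>\<^sub>M Q) {p. A < fst p \<and> A < snd p \<and> x < fst p + snd p}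
    \<le> ennreal c * emeasure (F \<Otimes>\<^sub>M Q) {p. A < fst p \<and> A < snd p \<and> x < fst p + snd p}"
proof -
  interpret P: prob_space P using assms rd_prob by auto
  interpret Q: prob_space Q using assms rd_prob by auto
  interpret F: prob_space F using assms rd_prob by auto
  interpret PQ: pair_prob_space P Q ..
  interpret FQ: pair_prob_space F Q ..
  define S where "S = {p::real\<times>real. A < fst p \<and> A < snd p \<and> x < fst p + snd p}"
  have S1: "S \<in> sets (P \<Otimes>\<^sub>M Q)" unfolding S_def using S3_sets assms by blast
  have S2: "S \<in> sets (F \<Otimes>\<^sub>M Q)" unfolding S_def using S3_sets assms by blast
  have "emeasure (P \<Otimes>\<^sub>M Q) S = (\<integral>\<^sup>+y. emeasure P ((\<lambda>x. (x, y)) -` S) \<partial>Q)"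
    by (rule PQ.emeasure_pair_measure_alt2[OF S1])
  also have "\<dots> \<le> (\<integral>\<^sup>+y. ennreal c * emeasure F ((\<lambda>x. (x, y)) -` S) \<partial>Q)"
  proof (intro nn_integral_mono)
    fix y
    have e: "(\<lambda>x. (x, y)) -` S = {t. A < t \<and> A < y \<and> x < t + y}" unfolding S_def by auto
    show "emeasure P ((\<lambda>x. (x, y)) -` S) \<le> ennreal c * emeasure F ((\<lambda>x. (x, y)) -` S)"
      unfolding e by (rule slice_dom[OF assms(1,3,4,5)])
  qed
  also have "\<dots> = ennreal c * (\<integral>\<^sup>+y. emeasure F ((\<lambda>x. (x, y)) -` S) \<partial>Q)"
    by (rule nn_integral_cmult[OF FQ.measurable_emeasure_Pair2[OF S2]])
  also have "\<dots> = ennreal c * emeasure (F \<Otimes>\<^sub>M Q) S"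
    by (simp add: FQ.emeasure_pair_measure_alt2[OF S2])
  finally show ?thesis unfolding S_def .
qed

lemma MM_dom2:
  assumes "real_distr P" "real_distr Q" "real_distr F" "0 \<le> c" "\<forall>t\<ge>A. tail Q t \<le> c * tail F t"
  shows "emeasure (P \<Otimes>\<^sub>M Q) {p. A < fst p \<and> A < snd p \<and> x < fst p + snd p}
    \<le> ennreal c * emeasure (P \<Otimes>\<^sub>M F) {p. A < fst p \<and> A < snd p \<and> x < fst p + snd p}"
proof -
  interpret P: prob_space P using assms rd_prob by auto
  interpret Q: prob_space Q using assms rd_prob by auto
  interpret F: prob_space F using assms rd_prob by auto
  interpret PQ: pair_prob_space P Q ..
  interpret PF: pair_prob_space P F ..
  define S where "S = {p::real\<times>real. A < fst p \<and> A < snd p \<and> x < fst p + snd p}"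
  have S1: "S \<in> sets (P \<Otimes>\<^sub>M Q)" unfolding S_def using S3_sets assms by blast
  have S2: "S \<in> sets (P \<Otimes>\<^sub>M F)" unfolding S_def using S3_sets assms by blast
  have "emeasure (P \<Otimes>\<^sub>M Q) S = (\<integral>\<^sup>+y. emeasure Q (Pair y -` S) \<partial>P)"
    by (rule Q.emeasure_pair_measure_alt[OF S1])
  also have "\<dots> \<le> (\<integral>\<^sup>+y. ennreal c * emeasure F (Pair y -` S) \<partial>P)"
  proof (intro nn_integral_mono)
    fix y
    have e: "Pair y -` S = {t. A < t \<and> A < y \<and> x < t + y}" unfolding S_def by auto
    show "emeasure Q (Pair y -` S) \<le> ennreal c * emeasure F (Pair y -` S)"
      unfolding e by (rule slice_dom[OF assms(2,3,4,5)])
  qed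
  also have "\<dots> = ennreal c * (\<integral>\<^sup>+y. emeasure F (Pair y -` S) \<partial>P)"
    by (rule nn_integral_cmult[OF PF.measurable_emeasure_Pair1[OF S2]])
  also have "\<dots> = ennreal c * emeasure (P \<Otimes>\<^sub>M F) S"
    by (simp add: F.emeasure_pair_measure_alt[OF S2])
  finally show ?thesis unfolding S_def .
qed

lemma MM_dom:
  assumes "real_distr P" "real_distr Q" "real_distr F" "0 \<le> c"
    "\<forall>t\<ge>A. tail P t \<le> c * tail F t" "\<forall>t\<ge>A. tail Q t \<le> c * tail F t"
  shows "MM P Q A x \<le> c * c * MM F F A x"
proof -
  interpret P: prob_space P using assms rd_prob by auto
  interpret Q: prob_space Q using assms rd_prob by auto
  interpret F: prob_space F using assms rd_prob by auto
  interpret PQ: prob_space "P \<Otimes>\<^sub>M Q" by (rule prob_space_pair) unfold_locales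
  interpret FQ: prob_space "F \<Otimes>\<^sub>M Q" by (rule prob_space_pair) unfold_locales
  interpret FF: prob_space "F \<Otimes>\<^sub>M F" by (rule prob_space_pair) unfold_locales
  define S where "S = {p::real\<times>real. A < fst p \<and> A < snd p \<and> x < fst p + snd p}"
  have "emeasure (P \<Otimes>\<^sub>M Q) S \<le> ennreal c * emeasure (F \<Otimes>\<^sub>M Q) S"
    unfolding S_def by (rule MM_dom1[OF assms(1-5)])
  also have "\<dots> \<le> ennreal c * (ennreal c * emeasure (F \<Otimes>\<^sub>M F) S)"
    unfolding S_def by (intro mult_left_mono MM_dom2[OF assms(3,2,3,4,6)]) auto
  finally have "ennreal (MM P Q A x) \<le> ennreal (c * c * MM F F A x)"
    unfolding MM_def S_def using assms(4)
    by (simp add: PQ.emeasure_eq_measure FF.emeasure_eq_measure ennreal_mult mult.assoc)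
  then show ?thesis
    using assms(4) by (subst (asm) ennreal_le_iff) (auto simp: MM_def)
qed

lemma tail_nonneg: "0 \<le> tail B x"
  by (simp add: tail_def)

lemma tail_le1: "real_distr B \<Longrightarrow> tail B x \<le> 1"
  unfolding tail_def using rd_prob prob_space.prob_le_1 by blast

lemma tail_anti: 
  assumes "real_distr B" "x \<le> y" shows "tail B y \<le> tail B x"
proof -
  interpret prob_space B using assms rd_prob by auto
  show ?thesis unfolding tail_def using assms rd_sets
    by (intro finite_measure_mono) auto
qed

lemma tail_pos: "inf_right_endpoint B \<Longrightarrow> 0 < tail B x"
  by (simp add: inf_right_endpoint_def)

lemma lim_add_const: "filterlim (\<lambda>x::real. x + y) at_top at_top"
  using filterlim_tendsto_add_at_top[OF tendsto_const filterlim_ident, of y] by (simp add: add.commute)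

lemma lim_mult_const: "0 < v \<Longrightarrow> filterlim (\<lambda>x::real. v * x) at_top at_top"
  by (intro filterlim_tendsto_pos_mult_at_top[OF tendsto_const]) (auto simp: filterlim_ident)

lemma lt_shift:
  assumes "long_tailed B" "inf_right_endpoint B"
  shows "((\<lambda>x. tail B (x + y) / tail B x) \<longlongrightarrow> 1) at_top"
proof (cases y "0::real" rule: linorder_cases)
  case less
  then have "((\<lambda>x. tail B (x - (-y)) / tail B x) \<longlongrightarrow> 1) at_top"
    using assms(1) less unfolding long_tailed_def by (metis neg_0_less_iff_less)
  then show ?thesis by simp
next
  case equal
  have "\<forall>x. tail B x \<noteq> 0" using tail_pos[OF assms(2)] by (metis less_irrefl)
  then show ?thesis using equal by simp
next
  case greater
  have "((\<lambda>x. tail B (x - y) / tail B x) \<longlongrightarrow> 1) at_top"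
    using assms(1) greater unfolding long_tailed_def by auto
  then have "((\<lambda>x. tail B ((x + y) - y) / tail B (x + y)) \<longlongrightarrow> 1) at_top"
    by (rule filterlim_compose) (rule lim_add_const)
  then have "((\<lambda>x. inverse (tail B x / tail B (x + y))) \<longlongrightarrow> inverse 1) at_top"
    by (intro tendsto_inverse) auto
  then show ?thesis by simp
qed

lemma interval_prob:
  assumes "real_distr P" "0 < e"
  shows "\<exists>A0\<ge>0. \<forall>A\<ge>A0. 1 - e \<le> measure P {-A..A}"
proof -
  interpret prob_space P using assms rd_prob by auto
  define S where "S = (\<lambda>n::nat. {- real n..real n})"
  have "(\<lambda>n. measure P (S n)) \<longlonglongrightarrow> measure P (\<Union>n. S n)"
    using assms rd_sets unfolding S_def
    by (intro finite_Lim_measure_incseq) (auto simp: incseq_def)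
  moreover have "(\<Union>n. S n) = UNIV"
  proof safe
    fix x :: real
    obtain n :: nat where "\<bar>x\<bar> \<le> real n" using real_arch_simple by blast
    then show "x \<in> (\<Union>n. S n)" unfolding S_def by (intro UN_I[of n]) auto
  qed auto
  ultimately have "(\<lambda>n. measure P (S n)) \<longlonglongrightarrow> 1"
    using prob_space rd_space[OF assms(1)] by simp
  then obtain N where N: "\<forall>n\<ge>N. dist (measure P (S n)) 1 < e"
    using assms(2) unfolding lim_sequentially by blast
  show ?thesis
  proof (intro exI[of _ "real N"] conjI allI impI)
    fix A assume "real N \<le> A"
    then have "measure P (S N) \<le> measure P {-A..A}"
      unfolding S_def using rd_sets[OF assms(1)] by (intro finite_measure_mono) auto
    moreover have "1 - e < measure P (S N)" using N by (auto simp: dist_real_def)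
    ultimately show "1 - e \<le> measure P {-A..A}" by simp
  qed simp
qed

lemma subexp_ratio:
  assumes "subexponential F" "inf_right_endpoint F"
  shows "((\<lambda>x. tail (F \<star> F) x / (2 * tail F x)) \<longlongrightarrow> 1) at_top"
proof -
  have "\<forall>x. tail F x \<noteq> 0" using tail_pos[OF assms(2)] by (metis less_irrefl)
  then show ?thesis using assms(1) unfolding subexponential_def
    by (intro asymp_equivD_strong) (auto intro!: always_eventually)
qed

lemma SF:
  assumes "real_distr F" "inf_right_endpoint F" "subexponential F" "0 < e"
  shows "\<exists>A0. \<forall>A\<ge>A0. eventually (\<lambda>x. MM F F A x \<le> e * tail F x) at_top"
proof -
  have lt: "long_tailed F" using assms(3) unfolding subexponential_def by auto
  obtain A0 where A0: "A0 \<ge> 0" "\<forall>A\<ge>A0. 1 - e/8 \<le> measure F {-A..A}"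
    using interval_prob[OF assms(1), of "e/8"] assms(4) by auto
  have ev1: "eventually (\<lambda>x. tail (F \<star> F) x / (2 * tail F x) < 1 + e/8) at_top"
    using subexp_ratio[OF assms(3,2)] assms(4) by (intro order_tendstoD) auto
  show ?thesis
  proof (intro exI[of _ A0] allI impI)
    fix A assume A: "A0 \<le> A"
    have ev2: "eventually (\<lambda>x. 1 - e/8 < tail F (x + A) / tail F x) at_top"
      using lt_shift[OF lt assms(2), of A] assms(4) by (intro order_tendstoD) auto
    show "eventually (\<lambda>x. MM F F A x \<le> e * tail F x) at_top"
      using ev1 ev2 eventually_gt_at_top[of 0]
    proof eventually_elim
      case (elim x)
      define t where "t = tail F x"
      define s where "s = tail F (x + A)"
      define p where "p = measure F {-A..A}"
      have t: "0 < t" unfolding t_def by (rule tail_pos[OF assms(2)])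
      have s: "(1 - e/8) * t < s" using elim(2) t unfolding s_def t_def by (simp add: field_simps)
      have p: "1 - e/8 \<le> p" using A0 A unfolding p_def by auto
      have conv: "tail (F \<star> F) x < (1 + e/8) * (2 * t)" using elim(1) t unfolding t_def
        by (simp add: field_simps)
      have low: "s * p + p * s + MM F F A x \<le> tail (F \<star> F) x"
        unfolding s_def p_def using decomp_lower[OF assms(1) assms(1), of A x] A0 A elim(3) by simp
      have conv2: "tail (F \<star> F) x < 2 * t + e * t / 4" using conv by (simp add: algebra_simps)
      have et: "0 \<le> e * t" using t assms(4) by simp
      have ps0: "0 \<le> p * s" unfolding p_def s_def by (simp add: tail_nonneg)
      show ?case
      proof (cases "e \<le> 8")
        case True
        have "0 \<le> 1 - e/8" using True by simp
        have "(1 - e/8) * ((1 - e/8) * t) \<le> p * s"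
          using s p \<open>0 \<le> 1 - e/8\<close> t by (intro mult_mono) auto
        moreover have "(1 - e/8) * ((1 - e/8) * t) = t - e * t / 4 + (e/8)^2 * t"
          by (simp add: power2_eq_square field_simps)
        moreover have "0 \<le> (e/8)^2 * t" using t by simp
        ultimately have "t - e * t / 4 \<le> p * s" by linarith
        then show ?thesis using low conv2 et unfolding t_def by (simp add: mult.commute)
      next
        case False
        have "8 * t < e * t" using False t by (simp add: mult_strict_right_mono)
        have "s * p + p * s = 2 * (p * s)" by simp
        then show ?thesis using low conv2 ps0 et \<open>8 * t < e * t\<close> unfolding t_def by linarith
      qed
    qed
  qed
qed

lemma GL:
  assumes F: "real_distr F" "inf_right_endpoint F" "subexponential F"
    and PQ: "real_distr P" "real_distr Q"
    and c: "0 \<le> c" "\<forall>t\<ge>T. tail P t \<le> c * tail F t" "\<forall>t\<ge>T. tail Q t \<le> c * tail F t"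
    and pos: "\<forall>x. 0 < tail P x + tail Q x"
    and L: "\<forall>y. ((\<lambda>x. (tail P (x + y) + tail Q (x + y)) / (tail P x + tail Q x)) \<longlongrightarrow> 1) at_top"
    and d: "0 < d" "eventually (\<lambda>x. tail F x \<le> d * (tail P x + tail Q x)) at_top"
  shows "((\<lambda>x. tail (P \<star> Q) x / (tail P x + tail Q x)) \<longlongrightarrow> 1) at_top"
proof -
  define \<psi> where "\<psi> = (\<lambda>x. tail P x + tail Q x)"
  have \<psi>pos: "\<And>x. 0 < \<psi> x" using pos unfolding \<psi>_def by auto
  have L': "\<And>y. ((\<lambda>x. \<psi> (x + y) / \<psi> x) \<longlongrightarrow> 1) at_top" using L unfolding \<psi>_def by auto
  have "\<forall>e>0. eventually (\<lambda>x. dist (tail (P \<star> Q) x / \<psi> x) 1 < e) at_top"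
  proof (intro allI impI)
    fix e :: real assume e: "0 < e"
    define \<eta> where "\<eta> = min (e/4) (1/8)"
    have \<eta>: "0 < \<eta>" "\<eta> \<le> e/4" "\<eta> \<le> 1/8" using e unfolding \<eta>_def by auto
    define \<epsilon> where "\<epsilon> = e / (2 * (1 + c * c * d))"
    have ccd: "0 \<le> c * c * d" using c d by simp
    have \<epsilon>: "0 < \<epsilon>" unfolding \<epsilon>_def using e ccd by simp
    have \<epsilon>2: "c * c * d * \<epsilon> < e / 2"
    proof -
      have "c * c * d * \<epsilon> = e / 2 * (c * c * d / (1 + c * c * d))"
        unfolding \<epsilon>_def using ccd by (simp add: field_simps)
      also have "\<dots> < e / 2 * 1" using ccd e by (intro mult_strict_left_mono) auto
      finally show ?thesis by simp
    qed
    obtain A1 where A1: "\<forall>A\<ge>A1. eventually (\<lambda>x. MM F F A x \<le> \<epsilon> * tail F x) at_top"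
      using SF[OF F \<epsilon>] by blast
    obtain AP where AP: "AP \<ge> 0" "\<forall>A\<ge>AP. 1 - \<eta> \<le> measure P {-A..A}"
      using interval_prob[OF PQ(1) \<eta>(1)] by blast
    obtain AQ where AQ: "AQ \<ge> 0" "\<forall>A\<ge>AQ. 1 - \<eta> \<le> measure Q {-A..A}"
      using interval_prob[OF PQ(2) \<eta>(1)] by blast
    define A where "A = max (max A1 T) (max AP AQ)"
    have A: "A1 \<le> A" "T \<le> A" "AP \<le> A" "AQ \<le> A" "0 \<le> A" using AP unfolding A_def by auto
    have ev1: "eventually (\<lambda>x. MM F F A x \<le> \<epsilon> * tail F x) at_top" using A1 A by auto
    have ev2: "eventually (\<lambda>x. \<psi> (x + - A) / \<psi> x < 1 + e/2) at_top"
      using L'[of "-A"] e by (intro order_tendstoD) auto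
    have ev3: "eventually (\<lambda>x. 1 - \<eta> < \<psi> (x + A) / \<psi> x) at_top"
      using L'[of "A"] \<eta> by (intro order_tendstoD) auto
    have dd: "eventually (\<lambda>x. tail F x \<le> d * \<psi> x) at_top" using d(2) unfolding \<psi>_def .
    show "eventually (\<lambda>x. dist (tail (P \<star> Q) x / \<psi> x) 1 < e) at_top"
      using ev1 ev2 ev3 dd eventually_gt_at_top[of 0]
    proof eventually_elim
      case (elim x)
      have px: "0 < \<psi> x" by (rule \<psi>pos)
      define cv where "cv = tail (P \<star> Q) x"
      have up1: "cv \<le> tail P (x - A) + tail Q (x - A) + MM P Q A x"
        unfolding cv_def by (rule decomp_upper[OF PQ])
      have "\<forall>t\<ge>A. tail P t \<le> c * tail F t" "\<forall>t\<ge>A. tail Q t \<le> c * tail F t" using c A by auto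
      then have up2: "MM P Q A x \<le> c * c * MM F F A x" by (intro MM_dom[OF PQ F(1) c(1)])
      have "c * c * MM F F A x \<le> c * c * (\<epsilon> * tail F x)"
        using elim(1) c by (intro mult_left_mono) auto
      also have "\<dots> \<le> c * c * (\<epsilon> * (d * \<psi> x))"
        using elim(4) c \<epsilon> by (intro mult_left_mono) auto
      also have "\<dots> = (c * c * d * \<epsilon>) * \<psi> x" by simp
      also have "\<dots> \<le> (e / 2) * \<psi> x" using \<epsilon>2 px by (intro mult_right_mono) auto
      finally have up3: "c * c * MM F F A x \<le> (e / 2) * \<psi> x" .
      have up4: "\<psi> (x - A) < (1 + e/2) * \<psi> x" using elim(2) px by (simp add: field_simps)
      have upper: "cv < (1 + e) * \<psi> x"
        using up1 up2 up3 up4 unfolding \<psi>_def by (simp add: algebra_simps)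
      have low1: "tail P (x + A) * measure Q {-A..A} + measure P {-A..A} * tail Q (x + A) + MM P Q A x \<le> cv"
        unfolding cv_def using decomp_lower[OF PQ A(5) elim(5)] .
      have "tail P (x + A) * (1 - \<eta>) \<le> tail P (x + A) * measure Q {-A..A}"
        using AQ A by (intro mult_left_mono) (auto simp: tail_nonneg)
      moreover have "(1 - \<eta>) * tail Q (x + A) \<le> measure P {-A..A} * tail Q (x + A)"
        using AP A by (intro mult_right_mono) (auto simp: tail_nonneg)
      moreover have "0 \<le> MM P Q A x" unfolding MM_def by simp
      ultimately have low2: "(1 - \<eta>) * \<psi> (x + A) \<le> cv"
        using low1 unfolding \<psi>_def by (simp add: algebra_simps)
      have "(1 - \<eta>) * ((1 - \<eta>) * \<psi> x) \<le> (1 - \<eta>) * \<psi> (x + A)"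
        using elim(3) px \<eta> by (intro mult_left_mono) (auto simp: field_simps)
      moreover have "(1 - \<eta>) * ((1 - \<eta>) * \<psi> x) = (1 - 2 * \<eta>) * \<psi> x + \<eta>^2 * \<psi> x"
        by (simp add: power2_eq_square field_simps)
      moreover have "0 \<le> \<eta>^2 * \<psi> x" using px by simp
      moreover have "(1 - e) * \<psi> x < (1 - 2 * \<eta>) * \<psi> x"
        using \<eta> px e by (intro mult_strict_right_mono) auto
      ultimately have lower: "(1 - e) * \<psi> x < cv" using low2 by linarith
      have "1 - e < cv / \<psi> x" using lower px by (simp add: field_simps)
      moreover have "cv / \<psi> x < 1 + e" using upper px by (simp add: field_simps)
      ultimately show ?case unfolding cv_def dist_real_def by auto
    qed
  qed
  then show ?thesis unfolding \<psi>_def by (simp add: tendsto_iff)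
qed

lemma inf_conv:
  assumes "real_distr P" "real_distr Q" "inf_right_endpoint P"
  shows "inf_right_endpoint (P \<star> Q)"
proof -
  obtain A0 where A0: "A0 \<ge> 0" "\<forall>A\<ge>A0. 1 - 1/2 \<le> measure Q {-A..A}"
    using interval_prob[OF assms(2), of "1/2"] by auto
  have pos1: "0 < tail (P \<star> Q) x" if x: "0 < x" for x
  proof -
    have "tail P (x + A0) * measure Q {-A0..A0} + measure P {-A0..A0} * tail Q (x + A0) + MM P Q A0 x
       \<le> tail (P \<star> Q) x" by (rule decomp_lower[OF assms(1,2) A0(1) x])
    moreover have "0 < tail P (x + A0) * measure Q {-A0..A0}"
      using A0 tail_pos[OF assms(3)] by (intro mult_pos_pos) auto
    moreover have "0 \<le> measure P {-A0..A0} * tail Q (x + A0)" by (simp add: tail_nonneg)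
    moreover have "0 \<le> MM P Q A0 x" by (simp add: MM_def)
    ultimately show ?thesis by linarith
  qed
  show ?thesis unfolding inf_right_endpoint_def
  proof
    fix x :: real
    show "0 < tail (P \<star> Q) x"
    proof (cases "0 < x")
      case True then show ?thesis by (rule pos1)
    next
      case False
      then have "tail (P \<star> Q) 1 \<le> tail (P \<star> Q) x"
        by (intro tail_anti real_distr_conv assms) auto
      then show ?thesis using pos1[of 1] by simp
    qed
  qed
qed

lemma lt_from_equiv:
  assumes "inf_right_endpoint H" "\<forall>x. 0 < \<psi> x"
    and r: "((\<lambda>x. tail H x / \<psi> x) \<longlongrightarrow> 1) at_top"
    and L: "\<forall>y. ((\<lambda>x. \<psi> (x + y) / \<psi> x) \<longlongrightarrow> 1) at_top"
  shows "long_tailed H"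
  unfolding long_tailed_def
proof (intro allI impI)
  fix y :: real assume "0 < y"
  have r2: "((\<lambda>x. tail H (x + - y) / \<psi> (x + - y)) \<longlongrightarrow> 1) at_top"
    using r by (rule filterlim_compose) (rule lim_add_const)
  have r3: "((\<lambda>x. inverse (tail H x / \<psi> x)) \<longlongrightarrow> inverse 1) at_top"
    using r by (intro tendsto_inverse) auto
  have lim: "((\<lambda>x. (tail H (x + - y) / \<psi> (x + - y)) * (\<psi> (x + - y) / \<psi> x) * inverse (tail H x / \<psi> x))
      \<longlongrightarrow> 1 * 1 * inverse 1) at_top"
    using L by (intro tendsto_mult r2 r3) blast
  have eq: "\<And>x. (tail H (x + - y) / \<psi> (x + - y)) * (\<psi> (x + - y) / \<psi> x) * inverse (tail H x / \<psi> x)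
     = tail H (x - y) / tail H x"
  proof -
    fix x
    have "\<And>z. \<psi> z \<noteq> 0" "\<And>z. tail H z \<noteq> 0" using assms(2) tail_pos[OF assms(1)]
      by (metis less_irrefl)+
    then show "(tail H (x + - y) / \<psi> (x + - y)) * (\<psi> (x + - y) / \<psi> x) * inverse (tail H x / \<psi> x)
     = tail H (x - y) / tail H x" by (simp add: field_simps)
  qed
  show "((\<lambda>x. tail H (x - y) / tail H x) \<longlongrightarrow> 1) at_top" using lim unfolding eq by simp
qed

lemma conv_main:
  assumes F: "real_distr F" "inf_right_endpoint F" "subexponential F"
    and G: "real_distr G" "inf_right_endpoint G"
    and c: "0 \<le> c" "\<forall>t\<ge>T. tail G t \<le> c * tail F t"
    and L: "\<forall>y. ((\<lambda>x. (tail F (x + y) + tail G (x + y)) / (tail F x + tail G x)) \<longlongrightarrow> 1) at_top"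
  shows "((\<lambda>x. tail (F \<star> G) x / (tail F x + tail G x)) \<longlongrightarrow> 1) at_top"
    and "subexponential (F \<star> G)" "real_distr (F \<star> G)" "inf_right_endpoint (F \<star> G)"
proof -
  define H where "H = (F \<star> G)"
  define \<psi> where "\<psi> = (\<lambda>x. tail F x + tail G x)"
  have Hr: "real_distr H" unfolding H_def by (rule real_distr_conv[OF F(1) G(1)])
  have Hi: "inf_right_endpoint H" unfolding H_def by (rule inf_conv[OF F(1) G(1) F(2)])
  have \<psi>pos: "\<forall>x. 0 < \<psi> x" unfolding \<psi>_def using tail_pos[OF F(2)] tail_nonneg by (simp add: add_pos_nonneg)
  define c' where "c' = max c 1"
  have c': "0 \<le> c'" "\<forall>t\<ge>T. tail G t \<le> c' * tail F t" "\<forall>t\<ge>T. tail F t \<le> c' * tail F t"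
  proof -
    show "0 \<le> c'" unfolding c'_def by simp
    show "\<forall>t\<ge>T. tail G t \<le> c' * tail F t"
    proof (intro allI impI)
      fix t assume "T \<le> t"
      then have "tail G t \<le> c * tail F t" using c by auto
      also have "\<dots> \<le> c' * tail F t" unfolding c'_def by (intro mult_right_mono) (auto simp: tail_nonneg)
      finally show "tail G t \<le> c' * tail F t" .
    qed
    show "\<forall>t\<ge>T. tail F t \<le> c' * tail F t"
    proof (intro allI impI)
      fix t
      have "1 * tail F t \<le> c' * tail F t" unfolding c'_def by (intro mult_right_mono) (auto simp: tail_nonneg)
      then show "tail F t \<le> c' * tail F t" by simp
    qed
  qed
  have a: "((\<lambda>x. tail H x / \<psi> x) \<longlongrightarrow> 1) at_top"
  proof -
    have dd1: "eventually (\<lambda>x. tail F x \<le> 1 * (tail F x + tail G x)) at_top"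
      by (intro always_eventually) (simp add: tail_nonneg)
    show ?thesis using GL[OF F F(1) G(1) c'(1) c'(3) c'(2) _ L zero_less_one dd1] \<psi>pos
      unfolding H_def \<psi>_def by simp
  qed
  then show "((\<lambda>x. tail (F \<star> G) x / (tail F x + tail G x)) \<longlongrightarrow> 1) at_top"
    unfolding H_def \<psi>_def .
  show "real_distr (F \<star> G)" "inf_right_endpoint (F \<star> G)" using Hr Hi unfolding H_def by auto
  have Hl: "long_tailed H"
    by (rule lt_from_equiv[OF Hi \<psi>pos a]) (use L in \<open>simp add: \<psi>_def\<close>)
  have ev2: "eventually (\<lambda>x. tail H x / \<psi> x < 2) at_top"
    using a by (intro order_tendstoD) auto
  have ev3: "eventually (\<lambda>x. 1/2 < tail H x / \<psi> x) at_top"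
    using a by (intro order_tendstoD) auto
  have "eventually (\<lambda>t. tail H t \<le> (2 * (1 + c')) * tail F t) at_top"
    using ev2 eventually_ge_at_top[of T]
  proof eventually_elim
    case (elim t)
    have "tail H t < 2 * \<psi> t" using elim(1) \<psi>pos by (simp add: field_simps)
    also have "\<dots> \<le> 2 * ((1 + c') * tail F t)"
      using c'(2) elim(2) unfolding \<psi>_def by (simp add: algebra_simps)
    finally show ?case by (simp only: distrib_right mult.assoc)
  qed
  then obtain T2 where T2: "\<forall>t\<ge>T2. tail H t \<le> (2 * (1 + c')) * tail F t"
    by (auto simp: eventually_at_top_linorder)
  have dd: "eventually (\<lambda>x. tail F x \<le> 1 * (tail H x + tail H x)) at_top"
    using ev3
  proof eventually_elim
    case (elim x)
    have "0 < \<psi> x" using \<psi>pos by blast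
    then have "\<psi> x < 2 * tail H x" using elim by (simp add: field_simps)
    then show ?case unfolding \<psi>_def using tail_nonneg[of G x] by simp
  qed
  have "((\<lambda>x. tail (H \<star> H) x / (tail H x + tail H x)) \<longlongrightarrow> 1) at_top"
  proof -
    have aa: "\<And>a b::real. (a + a) / (b + b) = a / b"
      by (metis mult_2 mult_divide_mult_cancel_left_if zero_neq_numeral)
    have Hpos: "\<forall>x. 0 < tail H x + tail H x" using tail_pos[OF Hi] by (simp add: add_pos_pos)
    have LH: "\<forall>y. ((\<lambda>x. (tail H (x + y) + tail H (x + y)) / (tail H x + tail H x)) \<longlongrightarrow> 1) at_top"
      unfolding aa using lt_shift[OF Hl Hi] by blast
    have c2: "0 \<le> 2 * (1 + c')" using c'(1) by simp
    show ?thesis by (rule GL[OF F Hr Hr c2 T2 T2 Hpos LH zero_less_one dd])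
  qed
  then have "((\<lambda>x. tail (H \<star> H) x / (2 * tail H x)) \<longlongrightarrow> 1) at_top"
    by (simp only: mult_2)
  then have "(\<lambda>x. tail (H \<star> H) x) \<sim>[at_top] (\<lambda>x. 2 * tail H x)"
    by (rule asymp_equivI')
  then show "subexponential (F \<star> G)" unfolding subexponential_def H_def[symmetric] using Hl by auto
qed

definition RR :: "real measure \<Rightarrow> real \<Rightarrow> real \<Rightarrow> real" where
  "RR B v x = tail B (v * x) / tail B x"

definition bs :: "real measure \<Rightarrow> real \<Rightarrow> real" where
  "bs B v = real_of_ereal (Bstar B v)"

lemma RR_bounds:
  assumes "real_distr B" "inf_right_endpoint B" "1 \<le> v" "0 < x"
  shows "0 \<le> RR B v x" "RR B v x \<le> 1"
proof -
  have "tail B (v * x) \<le> tail B x" using assms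
    by (intro tail_anti) (auto simp: mult_le_cancel_right1)
  then show "RR B v x \<le> 1" "0 \<le> RR B v x" unfolding RR_def
    using tail_pos[OF assms(2), of x] tail_nonneg[of B "v * x"] by auto
qed

lemma Bstar_RR: "Bstar B v = Limsup at_top (\<lambda>x. ereal (RR B v x))"
  unfolding Bstar_def RR_def ..

lemma Bstar_real:
  assumes "real_distr B" "inf_right_endpoint B" "1 \<le> v"
  shows "Bstar B v = ereal (bs B v)" "0 \<le> bs B v" "bs B v \<le> 1"
proof -
  have ev0: "eventually (\<lambda>x. ereal 0 \<le> ereal (RR B v x)) at_top"
    using eventually_gt_at_top[of 0] by eventually_elim (use RR_bounds[OF assms] in auto)
  have ev1: "eventually (\<lambda>x. ereal (RR B v x) \<le> ereal 1) at_top"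
    using eventually_gt_at_top[of 0] by eventually_elim (use RR_bounds[OF assms] in auto)
  have u: "Bstar B v \<le> 1" unfolding Bstar_RR using Limsup_bounded[OF ev1] by (simp add: one_ereal_def)
  have "0 \<le> Liminf at_top (\<lambda>x. ereal (RR B v x))" using Liminf_bounded[OF ev0] by (simp add: zero_ereal_def)
  also have "\<dots> \<le> Bstar B v" unfolding Bstar_RR by (rule Liminf_le_Limsup) simp
  finally have l: "0 \<le> Bstar B v" .
  show e: "Bstar B v = ereal (bs B v)" unfolding bs_def using u l
    by (cases "Bstar B v") auto
  show "0 \<le> bs B v" "bs B v \<le> 1" using u l e by auto
qed

lemma bs_lessD:
  assumes "real_distr B" "inf_right_endpoint B" "1 \<le> v" "bs B v < a"
  shows "eventually (\<lambda>x. RR B v x < a) at_top"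
proof -
  have "Limsup at_top (\<lambda>x. ereal (RR B v x)) < ereal a"
    using Bstar_real[OF assms(1-3)] assms(4) Bstar_RR by simp
  from Limsup_lessD[OF this] show ?thesis by simp
qed

lemma bs_leI:
  assumes "real_distr B" "inf_right_endpoint B" "1 \<le> v" "eventually (\<lambda>x. RR B v x \<le> a) at_top"
  shows "bs B v \<le> a"
proof -
  have "eventually (\<lambda>x. ereal (RR B v x) \<le> ereal a) at_top" using assms(4) by simp
  from Limsup_bounded[OF this] have "Bstar B v \<le> ereal a" unfolding Bstar_RR .
  then show ?thesis using Bstar_real[OF assms(1-3)] by simp
qed

lemma bs_one:
  assumes "real_distr B" "inf_right_endpoint B"
  shows "bs B 1 = 1"
proof -
  have "\<And>x. RR B 1 x = 1" unfolding RR_def using tail_pos[OF assms(2)] by (simp add: less_imp_neq[symmetric])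
  then have "Bstar B 1 = 1" unfolding Bstar_RR by (simp add: Limsup_const)
  then show ?thesis unfolding bs_def by simp
qed

lemma bs_anti:
  assumes "real_distr B" "inf_right_endpoint B" "1 \<le> v" "v \<le> w"
  shows "bs B w \<le> bs B v"
proof -
  have "eventually (\<lambda>x. ereal (RR B w x) \<le> ereal (RR B v x)) at_top"
    using eventually_gt_at_top[of 0]
  proof eventually_elim
    case (elim x)
    have "tail B (w * x) \<le> tail B (v * x)" using assms elim by (intro tail_anti) auto
    then show ?case unfolding RR_def using tail_pos[OF assms(2), of x] by (simp add: divide_right_mono)
  qed
  from Limsup_mono[OF this] have "Bstar B w \<le> Bstar B v" unfolding Bstar_RR .
  then show ?thesis using Bstar_real[OF assms(1,2)] assms by simp
qed

lemma RR_mult: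
  assumes "inf_right_endpoint B"
  shows "RR B (u * v) x = RR B u (v * x) * RR B v x"
  unfolding RR_def using tail_pos[OF assms] by (simp add: mult.assoc less_imp_neq[symmetric])

lemma bs_submult:
  assumes "real_distr B" "inf_right_endpoint B" "1 \<le> u" "1 \<le> v"
  shows "bs B (u * v) \<le> bs B u * bs B v"
proof (rule field_le_epsilon)
  fix e :: real assume e: "0 < e"
  define \<delta> where "\<delta> = min 1 (e / 3)"
  have \<delta>: "0 < \<delta>" "\<delta> \<le> 1" "\<delta> \<le> e / 3" using e unfolding \<delta>_def by auto
  define a where "a = bs B u + \<delta>"
  define b where "b = bs B v + \<delta>"
  have bu: "0 \<le> bs B u" "bs B u \<le> 1" using Bstar_real[OF assms(1,2,3)] by auto
  have bv: "0 \<le> bs B v" "bs B v \<le> 1" using Bstar_real[OF assms(1,2,4)] by auto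
  have ev1: "eventually (\<lambda>x. RR B u x < a) at_top"
    using bs_lessD[OF assms(1,2,3)] \<delta> unfolding a_def by simp
  have ev1': "eventually (\<lambda>x. RR B u (v * x) < a) at_top"
  proof -
    have "filterlim (\<lambda>x. v * x) at_top at_top" using assms(4) by (intro lim_mult_const) simp
    then show ?thesis using ev1 by (rule eventually_compose_filterlim[rotated])
  qed
  have ev2: "eventually (\<lambda>x. RR B v x < b) at_top"
    using bs_lessD[OF assms(1,2,4)] \<delta> unfolding b_def by simp
  have uv: "1 \<le> u * v" using assms(3,4) by (metis mult_mono' mult_1 zero_le_one)
  have "bs B (u * v) \<le> a * b"
  proof (rule bs_leI[OF assms(1,2) uv])
    show "eventually (\<lambda>x. RR B (u * v) x \<le> a * b) at_top"
      using ev1' ev2 eventually_gt_at_top[of 0]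
    proof eventually_elim
      case (elim x)
      have vx: "0 < v * x" using assms(4) elim(3) by simp
      have "RR B (u * v) x = RR B u (v * x) * RR B v x" by (rule RR_mult[OF assms(2)])
      also have "\<dots> \<le> a * b"
        using elim RR_bounds[OF assms(1,2,3) vx] RR_bounds[OF assms(1,2,4) elim(3)]
        by (intro mult_mono) auto
      finally show ?case .
    qed
  qed
  also have "a * b = bs B u * bs B v + \<delta> * (bs B u + bs B v + \<delta>)"
    unfolding a_def b_def by (simp add: algebra_simps)
  also have "\<delta> * (bs B u + bs B v + \<delta>) \<le> \<delta> * 3"
    using \<delta> bu bv by (intro mult_left_mono) auto
  finally show "bs B (u * v) \<le> bs B u * bs B v + e" using \<delta> by linarith
qed

lemma bs_pow:
  assumes "real_distr B" "inf_right_endpoint B" "1 \<le> v"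
  shows "bs B (v ^ n) \<le> bs B v ^ n"
proof (induction n)
  case 0
  then show ?case using bs_one[OF assms(1,2)] by simp
next
  case (Suc n)
  have vn: "1 \<le> v ^ n" using assms(3) by (rule one_le_power)
  have "bs B (v ^ Suc n) = bs B (v * v ^ n)" by simp
  also have "\<dots> \<le> bs B v * bs B (v ^ n)" by (rule bs_submult[OF assms vn])
  also have "\<dots> \<le> bs B v * bs B v ^ n"
    using Suc Bstar_real[OF assms] by (intro mult_left_mono) auto
  finally show ?case by simp
qed

definition rr :: "real measure \<Rightarrow> real \<Rightarrow> ereal" where
  "rr B v = eln (Bstar B v) / ereal (ln v)"

lemma rr_eq:
  assumes "real_distr B" "inf_right_endpoint B" "1 < v"
  shows "rr B v = (if bs B v = 0 then - \<infinity> else ereal (ln (bs B v) / ln v))"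
proof -
  have b: "Bstar B v = ereal (bs B v)" "0 \<le> bs B v" using Bstar_real[OF assms(1,2)] assms(3) by auto
  have l: "0 < ln v" using assms(3) by simp
  show ?thesis
  proof (cases "bs B v = 0")
    case True
    then show ?thesis unfolding rr_def b(1) eln_def using l by (simp add: divide_ereal_def)
  next
    case False
    then have "0 < bs B v" using b(2) by simp
    then show ?thesis unfolding rr_def b(1) eln_def using l False by (simp add: ereal_divide)
  qed
qed

lemma rr_lower:
  assumes "real_distr B" "inf_right_endpoint B" "1 < v" "v < v0" "0 < bs B v0"
  shows "ereal (ln (bs B v0) / (ln v0 - ln v)) \<le> rr B v"
proof -
  define b0 where "b0 = bs B v0"
  define lv where "lv = ln v"
  define l0 where "l0 = ln v0"
  have lv: "0 < lv" unfolding lv_def using assms by simp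
  have l0: "lv < l0" unfolding lv_def l0_def using assms by simp
  have b0: "0 < b0" "b0 \<le> 1" unfolding b0_def using assms Bstar_real[OF assms(1,2), of v0] by auto
  have bv: "b0 \<le> bs B v" unfolding b0_def using assms by (intro bs_anti) auto
  have bv1: "bs B v \<le> 1" using Bstar_real[OF assms(1,2), of v] assms by auto
  have bvpos: "0 < bs B v" using bv b0 by simp
  define n where "n = nat \<lfloor>l0 / lv\<rfloor>"
  have q1: "1 < l0 / lv" using lv l0 by simp
  have fl: "0 \<le> \<lfloor>l0 / lv\<rfloor>" using q1 by simp
  have nn: "real n = real_of_int \<lfloor>l0 / lv\<rfloor>" unfolding n_def using fl by simp
  have n1: "real n \<le> l0 / lv" unfolding nn by (rule of_int_floor_le)
  have n2: "l0 / lv - 1 < real n" unfolding nn using real_of_int_floor_add_one_gt[of "l0 / lv"] by linarith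
  have npos: "0 < real n" using n2 q1 by linarith
  have "real n * lv \<le> l0" using n1 lv by (simp add: field_simps)
  then have "ln (v ^ n) \<le> ln v0" unfolding lv_def l0_def using assms by (simp add: ln_realpow)
  then have vn: "v ^ n \<le> v0" using assms by (simp add: ln_le_cancel_iff)
  have v1: "1 \<le> v ^ n" using assms by (intro one_le_power) simp
  have "b0 \<le> bs B (v ^ n)" unfolding b0_def using vn v1 by (intro bs_anti[OF assms(1,2)])
  also have "\<dots> \<le> bs B v ^ n" using assms by (intro bs_pow) auto
  finally have "ln b0 \<le> ln (bs B v ^ n)" using b0 by simp
  then have k: "ln b0 \<le> real n * ln (bs B v)" using bvpos by (simp add: ln_realpow)
  have k2: "ln b0 / (real n * lv) \<le> ln (bs B v) / lv"
  proof -
    have "ln b0 / (real n * lv) \<le> (real n * ln (bs B v)) / (real n * lv)"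
      using k npos lv by (intro divide_right_mono) auto
    also have "\<dots> = ln (bs B v) / lv" using npos by simp
    finally show ?thesis .
  qed
  have k3: "ln b0 / (l0 - lv) \<le> ln b0 / (real n * lv)"
  proof (rule divide_left_mono_neg)
    show "l0 - lv \<le> real n * lv" using n2 lv by (simp add: field_simps)
    show "ln b0 \<le> 0" using b0 by simp
    show "0 < (l0 - lv) * (real n * lv)" using l0 lv npos by simp
  qed
  have "rr B v = ereal (ln (bs B v) / lv)" unfolding lv_def using rr_eq[OF assms(1-3)] bvpos by simp
  then show ?thesis using k2 k3 unfolding b0_def l0_def lv_def by simp
qed

lemma KEX:
  assumes "real_distr B" "inf_right_endpoint B"
  shows "\<exists>L. (rr B \<longlongrightarrow> L) (at_right 1)"
proof -
  define S where "S = (SUP v\<in>{1<..}. rr B v)"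
  have nb: "at_right (1::real) \<noteq> bot" by simp
  have ev: "eventually (\<lambda>v. 1 < v) (at_right (1::real))" by (simp add: eventually_at_right_less)
  have up: "Limsup (at_right 1) (rr B) \<le> S"
    by (rule Limsup_bounded) (use ev in eventually_elim, auto simp: S_def intro!: SUP_upper)
  have low: "rr B v0 \<le> Liminf (at_right 1) (rr B)" if v0: "1 < v0" for v0
  proof (cases "bs B v0 = 0")
    case True
    then show ?thesis using rr_eq[OF assms v0] by simp
  next
    case False
    then have bpos: "0 < bs B v0" using Bstar_real[OF assms, of v0] v0 by auto
    define g where "g = (\<lambda>v. ln (bs B v0) / (ln v0 - ln v))"
    have "((\<lambda>v. ln v) \<longlongrightarrow> ln 1) (at_right (1::real))"
      by (intro tendsto_ln tendsto_ident_at) auto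
    then have "(g \<longlongrightarrow> ln (bs B v0) / (ln v0 - ln 1)) (at_right 1)"
      unfolding g_def using v0 by (intro tendsto_intros) auto
    then have "((\<lambda>v. ereal (g v)) \<longlongrightarrow> ereal (ln (bs B v0) / ln v0)) (at_right 1)"
      by (simp add: lim_ereal)
    then have "Liminf (at_right 1) (\<lambda>v. ereal (g v)) = ereal (ln (bs B v0) / ln v0)"
      by (rule lim_imp_Liminf[OF nb])
    also have "ereal (ln (bs B v0) / ln v0) = rr B v0" using rr_eq[OF assms v0] False by simp
    finally have li: "Liminf (at_right 1) (\<lambda>v. ereal (g v)) = rr B v0" .
    have "eventually (\<lambda>v. ereal (g v) \<le> rr B v) (at_right 1)"
    proof -
      have "eventually (\<lambda>v. v < v0) (at_right (1::real))"
        using v0 by (simp add: eventually_at_right_field) (metis)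
      then show ?thesis using ev
        by eventually_elim (use rr_lower[OF assms _ _ bpos] in \<open>auto simp: g_def\<close>)
    qed
    from Liminf_mono[OF this] li show ?thesis by simp
  qed
  have "S \<le> Liminf (at_right 1) (rr B)" unfolding S_def
    by (rule SUP_least) (use low in auto)
  moreover have "Liminf (at_right 1) (rr B) \<le> Limsup (at_right 1) (rr B)"
    by (rule Liminf_le_Limsup[OF nb])
  ultimately have "Liminf (at_right 1) (rr B) = S" "Limsup (at_right 1) (rr B) = S"
    using up by auto
  then show ?thesis using Liminf_eq_Limsup[OF nb] by blast
qed

lemma K_minus_eq:
  assumes "(rr B \<longlongrightarrow> L) (at_right 1)"
  shows "K_minus B = - L"
  unfolding K_minus_def using tendsto_Lim[OF _ assms] by (simp add: rr_def[abs_def])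

lemma bs_le_equiv:
  assumes H: "real_distr H" "inf_right_endpoint H"
    and \<phi>: "\<forall>x. 0 < \<phi> x" "((\<lambda>x. tail H x / \<phi> x) \<longlongrightarrow> 1) at_top"
    and v: "1 \<le> v" and m: "0 \<le> m" "m \<le> 1"
    and ev: "\<forall>\<epsilon>>0. eventually (\<lambda>x. \<phi> (v * x) / \<phi> x \<le> m + \<epsilon>) at_top"
  shows "bs H v \<le> m"
proof (rule field_le_epsilon)
  fix e :: real assume e: "0 < e"
  define \<delta> where "\<delta> = min 1 (e / 3)"
  have \<delta>: "0 < \<delta>" "\<delta> \<le> 1" "\<delta> \<le> e / 3" using e unfolding \<delta>_def by auto
  have fl: "filterlim (\<lambda>x. v * x) at_top at_top" using v by (intro lim_mult_const) simp
  have w1: "((\<lambda>x. tail H (v * x) / \<phi> (v * x)) \<longlongrightarrow> 1) at_top"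
    by (rule filterlim_compose[OF \<phi>(2) fl])
  have w2: "((\<lambda>x. inverse (tail H x / \<phi> x)) \<longlongrightarrow> inverse 1) at_top"
    using \<phi>(2) by (intro tendsto_inverse) auto
  have "((\<lambda>x. (tail H (v * x) / \<phi> (v * x)) * inverse (tail H x / \<phi> x)) \<longlongrightarrow> 1 * inverse 1) at_top"
    by (intro tendsto_mult w1 w2)
  then have ew: "eventually (\<lambda>x. (tail H (v * x) / \<phi> (v * x)) * inverse (tail H x / \<phi> x) < 1 + \<delta>) at_top"
    using \<delta> by (intro order_tendstoD) auto
  have "bs H v \<le> (1 + \<delta>) * (m + \<delta>)"
  proof (rule bs_leI[OF H v])
    show "eventually (\<lambda>x. RR H v x \<le> (1 + \<delta>) * (m + \<delta>)) at_top"
      using ew ev[rule_format, OF \<delta>(1)]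
    proof eventually_elim
      case (elim x)
      have p1: "0 < \<phi> x" "0 < \<phi> (v * x)" using \<phi>(1) by auto
      have p2: "0 < tail H x" "0 < tail H (v * x)" using tail_pos[OF H(2)] by auto
      have eq: "RR H v x = ((tail H (v * x) / \<phi> (v * x)) * inverse (tail H x / \<phi> x)) * (\<phi> (v * x) / \<phi> x)"
        unfolding RR_def using p1 p2 by (simp add: field_simps)
      have nn: "0 \<le> (tail H (v * x) / \<phi> (v * x)) * inverse (tail H x / \<phi> x)" "0 \<le> \<phi> (v * x) / \<phi> x"
        using p1 p2 by auto
      show ?case unfolding eq using elim(1) elim(2) nn
        by (intro mult_mono) auto
    qed
  qed
  also have "(1 + \<delta>) * (m + \<delta>) = m + \<delta> * (1 + m + \<delta>)" by (simp add: algebra_simps)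
  also have "\<delta> * (1 + m + \<delta>) \<le> \<delta> * 3" using \<delta> m by (intro mult_left_mono) auto
  finally show "bs H v \<le> m + e" using \<delta> by linarith
qed

lemma eln_mono: "a \<le> b \<Longrightarrow> eln a \<le> eln b"
  unfolding eln_def by (cases a; cases b) auto

lemma mediant:
  assumes "0 < c" "0 < d" "a \<le> m * c" "b \<le> m * d"
  shows "(a + b) / (c + d) \<le> (m::real)"
  using assms by (simp add: divide_le_eq algebra_simps)

lemma sum_L:
  assumes "\<forall>x. 0 < f x" "\<forall>x. 0 < g x"
    and "((\<lambda>x. f (x + y) / f x) \<longlongrightarrow> 1) at_top" "((\<lambda>x. g (x + y) / g x) \<longlongrightarrow> 1) at_top"
  shows "((\<lambda>x. (f (x + y) + g (x + y)) / (f x + g x)) \<longlongrightarrow> (1::real)) at_top"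
proof (rule tendsto_sandwich)
  have "((\<lambda>x. min (f (x + y) / f x) (g (x + y) / g x)) \<longlongrightarrow> min 1 1) at_top"
    using assms by (intro tendsto_min) auto
  then show "((\<lambda>x. min (f (x + y) / f x) (g (x + y) / g x)) \<longlongrightarrow> 1) at_top" by simp
  have "((\<lambda>x. max (f (x + y) / f x) (g (x + y) / g x)) \<longlongrightarrow> max 1 1) at_top"
    using assms by (intro tendsto_max) auto
  then show "((\<lambda>x. max (f (x + y) / f x) (g (x + y) / g x)) \<longlongrightarrow> 1) at_top" by simp
  show "eventually (\<lambda>x. (f (x + y) + g (x + y)) / (f x + g x) \<le> max (f (x + y) / f x) (g (x + y) / g x)) at_top"
  proof (intro always_eventually allI)
    fix x
    have p: "0 < f x" "0 < g x" using assms by auto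
    show "(f (x + y) + g (x + y)) / (f x + g x) \<le> max (f (x + y) / f x) (g (x + y) / g x)"
    proof (rule mediant[OF p])
      show "f (x + y) \<le> max (f (x + y) / f x) (g (x + y) / g x) * f x"
        using p by (simp add: max_def field_simps)
      show "g (x + y) \<le> max (f (x + y) / f x) (g (x + y) / g x) * g x"
        using p by (simp add: max_def field_simps)
    qed
  qed
  show "eventually (\<lambda>x. min (f (x + y) / f x) (g (x + y) / g x) \<le> (f (x + y) + g (x + y)) / (f x + g x)) at_top"
  proof (intro always_eventually allI)
    fix x
    have p: "0 < f x" "0 < g x" using assms by auto
    let ?m = "min (f (x + y) / f x) (g (x + y) / g x)"
    have "?m * f x \<le> f (x + y)" using p by (simp add: min_def field_simps)
    moreover have "?m * g x \<le> g (x + y)" using p by (simp add: min_def field_simps)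
    ultimately have "?m * (f x + g x) \<le> f (x + y) + g (x + y)" by (simp add: algebra_simps)
    then show "?m \<le> (f (x + y) + g (x + y)) / (f x + g x)" using p by (simp add: le_divide_eq)
  qed
qed

lemma rr_bs:
  assumes "real_distr B" "inf_right_endpoint B" "1 < v"
  shows "rr B v = eln (ereal (bs B v)) / ereal (ln v)"
  unfolding rr_def using Bstar_real[OF assms(1,2)] assms(3) by simp

lemma rr_le:
  assumes "real_distr B" "inf_right_endpoint B" "real_distr C" "inf_right_endpoint C" "1 < v"
    and "bs B v \<le> bs C v"
  shows "rr B v \<le> rr C v"
  unfolding rr_bs[OF assms(1,2,5)] rr_bs[OF assms(3,4,5)] using assms(5,6)
  by (intro ereal_divide_right_mono eln_mono) auto

lemma K_pos_iff:
  assumes "real_distr B" "inf_right_endpoint B"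
  obtains L where "(rr B \<longlongrightarrow> L) (at_right 1)" "K_minus B = - L"
  using KEX[OF assms] K_minus_eq by blast

lemma K_conclude:
  assumes H: "real_distr H" "inf_right_endpoint H"
    and B: "real_distr B" "inf_right_endpoint B" "0 < K_minus B"
    and C: "real_distr C" "inf_right_endpoint C" "0 < K_minus C"
    and le: "\<And>v. 1 < v \<Longrightarrow> bs H v \<le> max (bs B v) (bs C v)"
  shows "0 < K_minus H"
proof -
  obtain LB where LB: "(rr B \<longlongrightarrow> LB) (at_right 1)" "K_minus B = - LB" using K_pos_iff[OF B(1,2)] by blast
  obtain LC where LC: "(rr C \<longlongrightarrow> LC) (at_right 1)" "K_minus C = - LC" using K_pos_iff[OF C(1,2)] by blast
  obtain LH where LH: "(rr H \<longlongrightarrow> LH) (at_right 1)" "K_minus H = - LH" using K_pos_iff[OF H(1,2)] by blast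
  have "eventually (\<lambda>v. rr H v \<le> max (rr B v) (rr C v)) (at_right (1::real))"
    using eventually_at_right_less[of "1::real"]
  proof eventually_elim
    case (elim v)
    show ?case
    proof (cases "bs C v \<le> bs B v")
      case True
      then have "rr H v \<le> rr B v" using le[OF elim] by (intro rr_le[OF H B(1,2) elim]) auto
      then show ?thesis by (rule max.coboundedI1)
    next
      case False
      then have "rr H v \<le> rr C v" using le[OF elim] by (intro rr_le[OF H C(1,2) elim]) auto
      then show ?thesis by (rule max.coboundedI2)
    qed
  qed
  then have "LH \<le> max LB LC"
    using tendsto_le[OF _ tendsto_max[OF LB(1) LC(1)] LH(1)] by simp
  moreover have "LB < 0" "LC < 0" using B(3) C(3) LB(2) LC(2) by auto
  ultimately have "LH < 0" by (simp add: max_def split: if_splits)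
  then show ?thesis using LH(2) by simp
qed

lemma psi_ratio_ev:
  assumes B: "real_distr B" "inf_right_endpoint B" and C: "real_distr C" "inf_right_endpoint C"
    and v: "1 \<le> v" and e: "0 < \<epsilon>"
  shows "eventually (\<lambda>x. (tail B (v * x) + tail C (v * x)) / (tail B x + tail C x)
           \<le> max (bs B v) (bs C v) + \<epsilon>) at_top"
proof -
  let ?m = "max (bs B v) (bs C v) + \<epsilon>"
  have e1: "eventually (\<lambda>x. RR B v x < ?m) at_top" using e by (intro bs_lessD[OF B v]) auto
  have e2: "eventually (\<lambda>x. RR C v x < ?m) at_top" using e by (intro bs_lessD[OF C v]) auto
  show ?thesis using e1 e2
  proof eventually_elim
    case (elim x)
    have p: "0 < tail B x" "0 < tail C x" using tail_pos B(2) C(2) by auto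
    show ?case
    proof (rule mediant[OF p])
      show "tail B (v * x) \<le> ?m * tail B x" using elim(1) p unfolding RR_def by (simp add: field_simps)
      show "tail C (v * x) \<le> ?m * tail C x" using elim(2) p unfolding RR_def by (simp add: field_simps)
    qed
  qed
qed

lemma case1:
  assumes F: "real_distr F" "inf_right_endpoint F" and G: "real_distr G" "inf_right_endpoint G"
    and AF: "A_star F" and TG: "T_star G" and O: "(\<lambda>x. tail G x) \<in> O[at_top](\<lambda>x. tail F x)"
  shows "(\<lambda>x. tail (F \<star> G) x) \<sim>[at_top] (\<lambda>x. tail F x + tail G x) \<and> A_star (F \<star> G)"
proof -
  have sF: "subexponential F" "0 < K_minus F" using AF unfolding A_star_def by auto
  have lF: "long_tailed F" using sF unfolding subexponential_def by auto
  have lG: "long_tailed G" "0 < K_minus G" using TG unfolding T_star_def by auto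
  obtain c where c: "0 < c" "eventually (\<lambda>x. norm (tail G x) \<le> c * norm (tail F x)) at_top"
    using O by (rule landau_o.bigE)
  then obtain T where T: "\<forall>t\<ge>T. tail G t \<le> c * tail F t"
    by (auto simp: eventually_at_top_linorder tail_nonneg)
  have L: "\<forall>y. ((\<lambda>x. (tail F (x + y) + tail G (x + y)) / (tail F x + tail G x)) \<longlongrightarrow> 1) at_top"
    using sum_L[OF _ _ lt_shift[OF lF F(2)] lt_shift[OF lG(1) G(2)]] tail_pos F(2) G(2) by blast
  note cm = conv_main[OF F sF(1) G less_imp_le[OF c(1)] T L]
  have eq: "(\<lambda>x. tail (F \<star> G) x) \<sim>[at_top] (\<lambda>x. tail F x + tail G x)"
    by (rule asymp_equivI'[OF cm(1)])
  have psipos: "\<forall>x. 0 < tail F x + tail G x" using tail_pos F(2) G(2) by (simp add: add_pos_pos)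
  have "0 < K_minus (F \<star> G)"
  proof (rule K_conclude[OF cm(3,4) F sF(2) G lG(2)])
    fix v :: real assume v: "1 < v"
    have b1: "0 \<le> max (bs F v) (bs G v)" "max (bs F v) (bs G v) \<le> 1"
      using Bstar_real[OF F, of v] Bstar_real[OF G, of v] v by auto
    show "bs (F \<star> G) v \<le> max (bs F v) (bs G v)"
      by (rule bs_le_equiv[OF cm(3,4) psipos cm(1) _ b1])
         (use v psi_ratio_ev[OF F G] in auto)
  qed
  then show ?thesis using eq cm(2) unfolding A_star_def by auto
qed

lemma case2:
  assumes F: "real_distr F" "inf_right_endpoint F" and G: "real_distr G" "inf_right_endpoint G"
    and AF: "A_star F" and o: "(\<lambda>x. tail G x) \<in> o[at_top](\<lambda>x. tail F x)"
  shows "(\<lambda>x. tail (F \<star> G) x) \<sim>[at_top] (\<lambda>x. tail F x) \<and> A_star (F \<star> G)"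
proof -
  have sF: "subexponential F" "0 < K_minus F" using AF unfolding A_star_def by auto
  have lF: "long_tailed F" using sF unfolding subexponential_def by auto
  have "eventually (\<lambda>x. norm (tail G x) \<le> 1 * norm (tail F x)) at_top"
    using o by (rule landau_o.smallD) simp
  then obtain T where T: "\<forall>t\<ge>T. tail G t \<le> 1 * tail F t"
    by (auto simp: eventually_at_top_linorder tail_nonneg)
  define \<rho> where "\<rho> = (\<lambda>x. tail G x / tail F x)"
  have \<rho>0: "(\<rho> \<longlongrightarrow> 0) at_top" unfolding \<rho>_def using smalloD_tendsto[OF o] .
  have Fpos: "\<And>x. 0 < tail F x" using tail_pos[OF F(2)] .
  have \<rho>nn: "\<And>x. 0 \<le> \<rho> x" unfolding \<rho>_def using Fpos by (simp add: tail_nonneg)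
  have psi: "\<And>x. tail F x + tail G x = tail F x * (1 + \<rho> x)"
    unfolding \<rho>_def using Fpos by (simp add: field_simps less_imp_neq[symmetric])
  have L: "\<forall>y. ((\<lambda>x. (tail F (x + y) + tail G (x + y)) / (tail F x + tail G x)) \<longlongrightarrow> 1) at_top"
  proof
    fix y :: real
    have r1: "((\<lambda>x. \<rho> (x + y)) \<longlongrightarrow> 0) at_top"
      by (rule filterlim_compose[OF \<rho>0 lim_add_const])
    have "((\<lambda>x. (tail F (x + y) / tail F x) * ((1 + \<rho> (x + y)) / (1 + \<rho> x))) \<longlongrightarrow> 1 * ((1 + 0) / (1 + 0))) at_top"
      by (intro tendsto_intros lt_shift[OF lF F(2)] r1 \<rho>0) auto
    moreover have "\<And>x. (tail F (x + y) / tail F x) * ((1 + \<rho> (x + y)) / (1 + \<rho> x))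
        = (tail F (x + y) + tail G (x + y)) / (tail F x + tail G x)"
      unfolding psi using Fpos \<rho>nn by (simp add: field_simps add_pos_nonneg)
    ultimately show "((\<lambda>x. (tail F (x + y) + tail G (x + y)) / (tail F x + tail G x)) \<longlongrightarrow> 1) at_top"
      by simp
  qed
  note cm = conv_main[OF F sF(1) G zero_le_one T L]
  have "((\<lambda>x. (tail (F \<star> G) x / (tail F x + tail G x)) * (1 + \<rho> x)) \<longlongrightarrow> 1 * (1 + 0)) at_top"
    by (intro tendsto_intros cm(1) \<rho>0)
  moreover have "\<And>x. (tail (F \<star> G) x / (tail F x + tail G x)) * (1 + \<rho> x) = tail (F \<star> G) x / tail F x"
  proof -
    fix x
    have a: "1 + \<rho> x \<noteq> 0" using \<rho>nn[of x] by linarith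
    have b: "tail F x \<noteq> 0" using Fpos[of x] by linarith
    show "(tail (F \<star> G) x / (tail F x + tail G x)) * (1 + \<rho> x) = tail (F \<star> G) x / tail F x"
      unfolding psi using mult_divide_mult_cancel_right[OF a, of "tail (F \<star> G) x" "tail F x"]
      by simp
  qed
  ultimately have r: "((\<lambda>x. tail (F \<star> G) x / tail F x) \<longlongrightarrow> 1) at_top" by simp
  have eq: "(\<lambda>x. tail (F \<star> G) x) \<sim>[at_top] (\<lambda>x. tail F x)"
    by (rule asymp_equivI'[OF r])
  have "0 < K_minus (F \<star> G)"
  proof (rule K_conclude[OF cm(3,4) F sF(2) F sF(2)])
    fix v :: real assume v: "1 < v"
    have b1: "0 \<le> bs F v" "bs F v \<le> 1" using Bstar_real[OF F, of v] v by auto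
    have "bs (F \<star> G) v \<le> bs F v"
    proof (rule bs_le_equiv[OF cm(3,4) _ r _ b1])
      show "\<forall>x. 0 < tail F x" using Fpos by auto
      show "1 \<le> v" using v by simp
      show "\<forall>\<epsilon>>0. eventually (\<lambda>x. tail F (v * x) / tail F x \<le> bs F v + \<epsilon>) at_top"
      proof (intro allI impI)
        fix \<epsilon> :: real assume "0 < \<epsilon>"
        then have "eventually (\<lambda>x. RR F v x < bs F v + \<epsilon>) at_top"
          using v by (intro bs_lessD[OF F]) auto
        then show "eventually (\<lambda>x. tail F (v * x) / tail F x \<le> bs F v + \<epsilon>) at_top"
          unfolding RR_def by (auto elim: eventually_mono)
      qed
    qed
    then show "bs (F \<star> G) v \<le> max (bs F v) (bs F v)" by simp
  qed
  then show ?thesis using eq cm(2) unfolding A_star_def by auto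
qed

theorem lemma4p2:
  fixes B1 B2 :: "real measure"
  assumes "real_distr B1" and "real_distr B2"
    and "inf_right_endpoint B1" and "inf_right_endpoint B2"
  shows "(A_star B1 \<and> T_star B2 \<and> (\<lambda>x. tail B2 x) \<in> O[at_top](\<lambda>x. tail B1 x)
            \<longrightarrow> (\<lambda>x. tail (B1 \<star> B2) x) \<sim>[at_top] (\<lambda>x. tail B1 x + tail B2 x)
                \<and> A_star (B1 \<star> B2))
       \<and> (A_star B1 \<and> (\<lambda>x. tail B2 x) \<in> o[at_top](\<lambda>x. tail B1 x)
            \<longrightarrow> (\<lambda>x. tail (B1 \<star> B2) x) \<sim>[at_top] (\<lambda>x. tail B1 x)
                \<and> A_star (B1 \<star> B2))"
  using case1[OF assms(1,3,2,4)] case2[OF assms(1,3,2,4)] by blast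

end
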